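(* Let $\beta>1$, $I_L=\bigcup_{k\in\mathbb{N}}(2k+1,2k+2)$, $I_D=\bigcup_{k\in\mathbb{N}}(2k,2k+1)$. Then: (i) $l_t(t,\beta)=\sqrt{1-\hat\sigma^2(t,\beta)}-1$ for every $t\in I_L$; (ii) $l_t(t,\beta)=\sqrt{\beta^2-\hat\sigma^2(t,\beta)}-1$ for every $t\in I_D$; (iii) $l(\cdot,\beta)$ is strictly convex on each of the open intervals composing $I_L\cup I_D$; (iv) $l(\cdot,\beta)$ is strictly decreasing on each of the open intervals composing $I_L$; (v) if $\beta\ge\sqrt{3/2}$, then $l(\cdot,\beta)$ is strictly increasing on each of the open intervals composing $I_D$; (vi) if $1<\beta<\sqrt{3/2}$, then there exists a unique $t_0>0$, characterized by $\hat\sigma(t_0,\beta)=\sqrt{\beta^2-1}$, such that $l_t(t,\beta)<0$ for all $t\in[0,t_0)\cap I_D$ and $l_t(t,\beta)>0$ for all $t\in(t_0,+\infty)\cap I_D$.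
   Context: $\mathbb{N}=\{0,1,2,\dots\}$. For $t\ge 0$ let $q(t)=\lfloor t+1\rfloor/2$ if $\lfloor t\rfloor$ is odd and $q(t)=t-\lfloor t\rfloor/2$ if $\lfloor t\rfloor$ is even, and $p(t)=t+1-q(t)$. For $\beta\ge1$ let $\hat\sigma(t,\beta)\in(0,1)$ be the unique solution $\sigma$ of $\frac{p(t)\sigma}{\sqrt{1-\sigma^2}}+\frac{q(t)\sigma}{\sqrt{\beta^2-\sigma^2}}=1$. The normalized length is $l(t,\beta)=\frac{p(t)}{\sqrt{1-\hat\sigma^2}}+\frac{\beta^2q(t)}{\sqrt{\beta^2-\hat\sigma^2}}-t-\sqrt2$, $\hat\sigma=\hat\sigma(t,\beta)$; $l_t$ denotes its partial derivative in $t$. *)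

theory Defs
  imports "HOL-Analysis.Analysis"
begin

definition qf :: "real \<Rightarrow> real" where
  "qf t = (if odd \<lfloor>t\<rfloor> then real_of_int \<lfloor>t + 1\<rfloor> / 2
           else t - real_of_int \<lfloor>t\<rfloor> / 2)"

definition pf :: "real \<Rightarrow> real" where
  "pf t = t + 1 - qf t"

definition sigma_hat :: "real \<Rightarrow> real \<Rightarrow> real" where
  "sigma_hat t \<beta> = (THE \<sigma>. 0 < \<sigma> \<and> \<sigma> < 1 \<and>
      pf t * \<sigma> / sqrt (1 - \<sigma>\<^sup>2) + qf t * \<sigma> / sqrt (\<beta>\<^sup>2 - \<sigma>\<^sup>2) = 1)"

definition len :: "real \<Rightarrow> real \<Rightarrow> real" where
  "len t \<beta> = pf t / sqrt (1 - (sigma_hat t \<beta>)\<^sup>2)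
      + \<beta>\<^sup>2 * qf t / sqrt (\<beta>\<^sup>2 - (sigma_hat t \<beta>)\<^sup>2) - t - sqrt 2"

definition I_L :: "real set" where
  "I_L = (\<Union>k::nat. {real (2*k+1) <..< real (2*k+2)})"

definition I_D :: "real set" where
  "I_D = (\<Union>k::nat. {real (2*k) <..< real (2*k+1)})"

definition strict_convex_on :: "real set \<Rightarrow> (real \<Rightarrow> real) \<Rightarrow> bool" where
  "strict_convex_on S f \<longleftrightarrow> (\<forall>x\<in>S. \<forall>y\<in>S. \<forall>u. x \<noteq> y \<and> 0 < u \<and> u < 1 \<longrightarrow>
      f (u * x + (1 - u) * y) < u * f x + (1 - u) * f y)"

end

theory Submission
  imports Defs
begin


lemma qf_alt: "qf x = (if odd \<lfloor>x\<rfloor> then (of_int \<lfloor>x\<rfloor> + 1)/2 else x - of_int \<lfloor>x\<rfloor>/2)"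
  unfolding qf_def by simp

lemma qf_same:
  assumes "\<lfloor>s\<rfloor> = \<lfloor>t\<rfloor>" "s \<le> t"
  shows "qf s \<le> qf t \<and> qf t - qf s \<le> t - s"
  using assms by (simp add: qf_alt)

lemma qf_mono_lip:
  assumes "0 \<le> s" "s \<le> t"
  shows "qf s \<le> qf t \<and> qf t - qf s \<le> t - s"
proof (cases "\<lfloor>s\<rfloor> = \<lfloor>t\<rfloor>")
  case True then show ?thesis using qf_same assms by blast
next
  case False
  define m where "m = \<lfloor>s\<rfloor>"
  define n where "n = \<lfloor>t\<rfloor>"
  have mn: "m + 1 \<le> n" using assms False unfolding m_def n_def
    by (metis floor_mono le_less zless_imp_add1_zle)
  have s1: "of_int m \<le> s" "s < of_int m + 1" unfolding m_def by linarith+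
  have t1: "of_int n \<le> t" "t < of_int n + 1" unfolding n_def by linarith+
  have qs: "qf s = (if odd m then (of_int m + 1)/2 else s - of_int m/2)"
    unfolding m_def by (rule qf_alt)
  have qt: "qf t = (if odd n then (of_int n + 1)/2 else t - of_int n/2)"
    unfolding n_def by (rule qf_alt)
  show ?thesis
  proof (cases "even m")
    case em: True
    then obtain a where a: "m = 2*a" by blast
    show ?thesis
    proof (cases "even n")
      case en: True
      then obtain b where b: "n = 2*b" by blast
      have "a + 1 \<le> b" using mn a b by linarith
      then have r: "real_of_int a + 1 \<le> real_of_int b" by linarith
      show ?thesis using qs qt em en a b r s1 t1 by simp
    next
      case en: False
      then obtain b where b: "n = 2*b+1" using oddE by blast
      have "a \<le> b" using mn a b by linarith
      then have r: "real_of_int a \<le> real_of_int b" by linarith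
      show ?thesis using qs qt em en a b r s1 t1 by simp
    qed
  next
    case em: False
    then obtain a where a: "m = 2*a+1" using oddE by blast
    show ?thesis
    proof (cases "even n")
      case en: True
      then obtain b where b: "n = 2*b" by blast
      have "a + 1 \<le> b" using mn a b by linarith
      then have r: "real_of_int a + 1 \<le> real_of_int b" by linarith
      show ?thesis using qs qt em en a b r s1 t1 by simp
    next
      case en: False
      then obtain b where b: "n = 2*b+1" using oddE by blast
      have "a + 1\<le> b" using mn a b by linarith
      then have r: "real_of_int a + 1 \<le> real_of_int b" by linarith
      show ?thesis using qs qt em en a b r s1 t1 by simp
    qed
  qed
qed

lemma pq_mono:
  assumes "0 \<le> s" "s \<le> t"
  shows "qf s \<le> qf t" "pf s \<le> pf t"
  using qf_mono_lip[OF assms] unfolding pf_def by auto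

lemma qf0: "qf 0 = 0" and pf0: "pf 0 = 1"
  by (simp_all add: qf_def pf_def)

lemma pq_pos: assumes "0 \<le> t" shows "0 \<le> qf t" "1 \<le> pf t"
  using pq_mono[OF order_refl assms] qf0 pf0 by auto

lemma qf_lip: "0 \<le> s \<Longrightarrow> 0 \<le> t \<Longrightarrow> \<bar>qf t - qf s\<bar> \<le> \<bar>t - s\<bar>"
  using qf_mono_lip[of s t] qf_mono_lip[of t s] by (cases "s \<le> t") auto

lemma pf_lip: "0 \<le> s \<Longrightarrow> 0 \<le> t \<Longrightarrow> \<bar>pf t - pf s\<bar> \<le> \<bar>t - s\<bar>"
  using qf_mono_lip[of s t] qf_mono_lip[of t s] unfolding pf_def by (cases "s \<le> t") auto

lemma D_pq: assumes "t \<in> {real (2*k) <..< real (2*k+1)}"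
  shows "pf t = real k + 1" "qf t = t - real k"
proof -
  have "\<lfloor>t\<rfloor> = 2 * int k" using assms by (simp add: floor_eq_iff)
  then show "qf t = t - real k" "pf t = real k + 1" by (simp_all add: qf_alt pf_def)
qed

lemma L_pq: assumes "t \<in> {real (2*k+1) <..< real (2*k+2)}"
  shows "pf t = t - real k" "qf t = real k + 1"
proof -
  have "\<lfloor>t\<rfloor> = 2 * int k + 1" using assms by (simp add: floor_eq_iff)
  then show "qf t = real k + 1" "pf t = t - real k" by (simp_all add: qf_alt pf_def field_simps)
qed



definition FF :: "real \<Rightarrow> real \<Rightarrow> real \<Rightarrow> real \<Rightarrow> real" where
  "FF \<beta> P Q \<sigma> = P * \<sigma> / sqrt (1 - \<sigma>\<^sup>2) + Q * \<sigma> / sqrt (\<beta>\<^sup>2 - \<sigma>\<^sup>2)"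

definition WW :: "real \<Rightarrow> real \<Rightarrow> real \<Rightarrow> real \<Rightarrow> real" where
  "WW \<beta> P Q \<sigma> = P * sqrt (1 - \<sigma>\<^sup>2) + Q * sqrt (\<beta>\<^sup>2 - \<sigma>\<^sup>2) + \<sigma>"

definition MM :: "real \<Rightarrow> real \<Rightarrow> real \<Rightarrow> real \<Rightarrow> real" where
  "MM \<beta> P Q s = P / sqrt (1 - s\<^sup>2) + Q * \<beta>\<^sup>2 / sqrt (\<beta>\<^sup>2 - s\<^sup>2)"

lemma sq_lt1: "0 \<le> (x::real) \<Longrightarrow> x < 1 \<Longrightarrow> x\<^sup>2 < 1"
  by (simp add: abs_square_less_1)

lemma sq_ltb: "0 \<le> (x::real) \<Longrightarrow> x < 1 \<Longrightarrow> 1 < \<beta> \<Longrightarrow> x\<^sup>2 < \<beta>\<^sup>2"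
  by (smt (verit) power_strict_mono zero_less_numeral)

lemma ratio_mono:
  assumes "0 \<le> x" "x < y" "y\<^sup>2 < a"
  shows "x / sqrt (a - x\<^sup>2) < y / sqrt (a - y\<^sup>2)"
proof -
  have xy: "x\<^sup>2 < y\<^sup>2" using assms by (simp add: power_strict_mono)
  have B: "0 < sqrt (a - y\<^sup>2)" using assms by simp
  have "sqrt (a - y\<^sup>2) \<le> sqrt (a - x\<^sup>2)" using xy by simp
  then have "x / sqrt (a - x\<^sup>2) \<le> x / sqrt (a - y\<^sup>2)"
    using B assms(1) by (simp add: frac_le)
  also have "\<dots> < y / sqrt (a - y\<^sup>2)" using B assms(2) by (simp add: divide_strict_right_mono)
  finally show ?thesis .
qed

lemma ratio_mono_le:
  assumes "0 \<le> x" "x \<le> y" "y\<^sup>2 < a"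
  shows "x / sqrt (a - x\<^sup>2) \<le> y / sqrt (a - y\<^sup>2)"
  using ratio_mono[OF assms(1) _ assms(3)] assms(2) by (cases "x = y") auto

lemma FF_strict:
  assumes "1 < \<beta>" "0 < P" "0 \<le> Q" "0 \<le> x" "x < y" "y < 1"
  shows "FF \<beta> P Q x < FF \<beta> P Q y"
proof -
  have y1: "y\<^sup>2 < 1" using assms sq_lt1 by simp
  have yb: "y\<^sup>2 < \<beta>\<^sup>2" using assms sq_ltb by simp
  have "P * (x / sqrt (1 - x\<^sup>2)) < P * (y / sqrt (1 - y\<^sup>2))"
    using ratio_mono[OF assms(4,5) y1] assms(2) by (intro mult_strict_left_mono) auto
  moreover have "Q * (x / sqrt (\<beta>\<^sup>2 - x\<^sup>2)) \<le> Q * (y / sqrt (\<beta>\<^sup>2 - y\<^sup>2))"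
    using ratio_mono_le[OF assms(4) _ yb] assms(3,5) by (intro mult_left_mono) auto
  ultimately show ?thesis unfolding FF_def by simp
qed

lemma FF0: "FF \<beta> P Q 0 = 0" by (simp add: FF_def)

lemma FF_exists:
  assumes "1 < \<beta>" "1 \<le> P" "0 \<le> Q"
  shows "\<exists>\<sigma>. 0 < \<sigma> \<and> \<sigma> < 1 \<and> FF \<beta> P Q \<sigma> = 1"
proof -
  have c: "continuous_on {0..4/5} (FF \<beta> P Q)"
  proof -
    have "\<forall>x\<in>{0..4/5::real}. x\<^sup>2 < 1 \<and> x\<^sup>2 < \<beta>\<^sup>2" using sq_lt1 sq_ltb assms(1) by auto
    then show ?thesis unfolding FF_def
      by (intro continuous_intros) auto
  qed
  have s: "sqrt (1 - (4/5::real)\<^sup>2) = 3/5"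
  proof -
    have "1 - (4/5::real)\<^sup>2 = (3/5)\<^sup>2" by (simp add: power2_eq_square)
    then show ?thesis by simp
  qed
  have "P * (4/5) / sqrt (1 - (4/5)\<^sup>2) = P * (4/3)" by (simp add: s)
  then have "1 \<le> P * (4/5) / sqrt (1 - (4/5)\<^sup>2)" using assms by simp
  moreover have "0 \<le> Q * (4/5) / sqrt (\<beta>\<^sup>2 - (4/5)\<^sup>2)" using assms by simp
  ultimately have "1 \<le> FF \<beta> P Q (4/5)" unfolding FF_def by linarith
  then obtain x where x: "0 \<le> x" "x \<le> 4/5" "FF \<beta> P Q x = 1"
    using IVT'[of "FF \<beta> P Q" 0 1 "4/5"] c FF0 by auto
  then have "x \<noteq> 0" using FF0 by auto
  then show ?thesis using x by (intro exI[of _ x]) auto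
qed

lemma FF_unique:
  assumes "1 < \<beta>" "0 < P" "0 \<le> Q" "0 < x" "x < 1" "0 < y" "y < 1"
    "FF \<beta> P Q x = 1" "FF \<beta> P Q y = 1"
  shows "x = y"
  using FF_strict[of \<beta> P Q x y] FF_strict[of \<beta> P Q y x] assms
  by (cases x y rule: linorder_cases) auto

lemma sig_ex1:
  assumes "1 < \<beta>" "0 \<le> t"
  shows "\<exists>!\<sigma>. 0 < \<sigma> \<and> \<sigma> < 1 \<and> FF \<beta> (pf t) (qf t) \<sigma> = 1"
  using FF_exists[of \<beta> "pf t" "qf t"] FF_unique[of \<beta> "pf t" "qf t"] pq_pos[OF assms(2)] assms(1)
  by (metis (no_types, lifting) order_less_le_trans zero_less_one)

lemma sig_props:
  assumes "1 < \<beta>" "0 \<le> t"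
  shows "0 < sigma_hat t \<beta>" "sigma_hat t \<beta> < 1" "FF \<beta> (pf t) (qf t) (sigma_hat t \<beta>) = 1"
  using theI'[OF sig_ex1[OF assms]] unfolding sigma_hat_def FF_def by auto

lemma sig_eq:
  assumes "1 < \<beta>" "0 \<le> t" "0 < \<sigma>" "\<sigma> < 1" "FF \<beta> (pf t) (qf t) \<sigma> = 1"
  shows "sigma_hat t \<beta> = \<sigma>"
  unfolding sigma_hat_def
  using the1_equality[OF sig_ex1[OF assms(1,2)]] assms(3-5) unfolding FF_def by auto

lemma CS:
  fixes a s \<sigma> :: real
  assumes "s\<^sup>2 < a" "\<sigma>\<^sup>2 \<le> a"
  shows "sqrt (a - \<sigma>\<^sup>2) * sqrt (a - s\<^sup>2) + \<sigma> * s \<le> a"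
proof -
  define X where "X = sqrt (a - \<sigma>\<^sup>2)"
  define Y where "Y = sqrt (a - s\<^sup>2)"
  have X2: "X\<^sup>2 = a - \<sigma>\<^sup>2" unfolding X_def using assms by simp
  have Y2: "Y\<^sup>2 = a - s\<^sup>2" unfolding Y_def using assms by simp
  have "0 \<le> (X - Y)\<^sup>2 + (\<sigma> - s)\<^sup>2" by simp
  then have "0 \<le> X\<^sup>2 + Y\<^sup>2 + \<sigma>\<^sup>2 + s\<^sup>2 - 2 * (X * Y + \<sigma> * s)"
    by (simp add: power2_diff algebra_simps)
  then show ?thesis using X2 Y2 unfolding X_def[symmetric] Y_def[symmetric] by simp
qed

lemma term_le:
  fixes a s \<sigma> :: real
  assumes "s\<^sup>2 < a" "\<sigma>\<^sup>2 \<le> a"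
  shows "sqrt (a - \<sigma>\<^sup>2) + \<sigma> * s / sqrt (a - s\<^sup>2) \<le> a / sqrt (a - s\<^sup>2)"
proof -
  have Y: "0 < sqrt (a - s\<^sup>2)" using assms by simp
  have "(sqrt (a - \<sigma>\<^sup>2) + \<sigma> * s / sqrt (a - s\<^sup>2)) * sqrt (a - s\<^sup>2)
      = sqrt (a - \<sigma>\<^sup>2) * sqrt (a - s\<^sup>2) + \<sigma> * s" using Y by (simp add: field_simps)
  also have "\<dots> \<le> a" using CS[OF assms] .
  finally show ?thesis using Y by (simp add: pos_le_divide_eq)
qed

lemma term_eq:
  fixes a s :: real
  assumes "s\<^sup>2 < a"
  shows "sqrt (a - s\<^sup>2) + s * s / sqrt (a - s\<^sup>2) = a / sqrt (a - s\<^sup>2)"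
proof -
  have Y: "0 < sqrt (a - s\<^sup>2)" using assms by simp
  have "(sqrt (a - s\<^sup>2))\<^sup>2 = a - s\<^sup>2" using assms by simp
  then show ?thesis using Y by (simp add: field_simps power2_eq_square)
qed

lemma W_le:
  assumes "1 < \<beta>" "0 \<le> P" "0 \<le> Q" "0 < s" "s < 1" "FF \<beta> P Q s = 1" "0 \<le> \<sigma>" "\<sigma> < 1"
  shows "WW \<beta> P Q \<sigma> \<le> MM \<beta> P Q s" "WW \<beta> P Q s = MM \<beta> P Q s"
proof -
  have s1: "s\<^sup>2 < 1" and sb: "s\<^sup>2 < \<beta>\<^sup>2" using assms sq_lt1 sq_ltb by auto
  have o1: "\<sigma>\<^sup>2 \<le> 1" and ob: "\<sigma>\<^sup>2 \<le> \<beta>\<^sup>2" using assms sq_lt1 sq_ltb by (auto intro: less_imp_le)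
  have eq: "\<And>x. WW \<beta> P Q x = P * (sqrt (1 - x\<^sup>2) + x * s / sqrt (1 - s\<^sup>2))
        + Q * (sqrt (\<beta>\<^sup>2 - x\<^sup>2) + x * s / sqrt (\<beta>\<^sup>2 - s\<^sup>2))"
  proof -
    fix x
    have "x = x * FF \<beta> P Q s" using assms by simp
    then show "WW \<beta> P Q x = P * (sqrt (1 - x\<^sup>2) + x * s / sqrt (1 - s\<^sup>2))
        + Q * (sqrt (\<beta>\<^sup>2 - x\<^sup>2) + x * s / sqrt (\<beta>\<^sup>2 - s\<^sup>2))"
      unfolding WW_def FF_def by (simp add: algebra_simps)
  qed
  have "P * (sqrt (1 - \<sigma>\<^sup>2) + \<sigma> * s / sqrt (1 - s\<^sup>2)) \<le> P * (1 / sqrt (1 - s\<^sup>2))"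
    using term_le[OF s1 o1] assms(2) by (intro mult_left_mono) auto
  moreover have "Q * (sqrt (\<beta>\<^sup>2 - \<sigma>\<^sup>2) + \<sigma> * s / sqrt (\<beta>\<^sup>2 - s\<^sup>2)) \<le> Q * (\<beta>\<^sup>2 / sqrt (\<beta>\<^sup>2 - s\<^sup>2))"
    using term_le[OF sb ob] assms(3) by (intro mult_left_mono) auto
  ultimately show "WW \<beta> P Q \<sigma> \<le> MM \<beta> P Q s" unfolding eq MM_def by simp
  show "WW \<beta> P Q s = MM \<beta> P Q s" unfolding eq MM_def
    using term_eq[OF s1] term_eq[OF sb] by simp
qed



lemma FF_lin: "FF \<beta> P Q \<sigma> = P * (\<sigma> / sqrt (1 - \<sigma>\<^sup>2)) + Q * (\<sigma> / sqrt (\<beta>\<^sup>2 - \<sigma>\<^sup>2))"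
  unfolding FF_def by simp

lemma FF_t_strict:
  assumes "1 < \<beta>" "0 \<le> s" "s < t" "0 < \<sigma>" "\<sigma> < 1"
  shows "FF \<beta> (pf s) (qf s) \<sigma> < FF \<beta> (pf t) (qf t) \<sigma>"
proof -
  define a where "a = \<sigma> / sqrt (1 - \<sigma>\<^sup>2)"
  define b where "b = \<sigma> / sqrt (\<beta>\<^sup>2 - \<sigma>\<^sup>2)"
  have "\<sigma>\<^sup>2 < 1" "\<sigma>\<^sup>2 < \<beta>\<^sup>2" using assms sq_lt1 sq_ltb by auto
  then have a: "0 < a" and b: "0 < b" unfolding a_def b_def using assms by auto
  have m: "pf s \<le> pf t" "qf s \<le> qf t" using pq_mono[of s t] assms by auto
  have sum: "(pf t - pf s) + (qf t - qf s) = t - s" unfolding pf_def by simp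
  have "0 < (pf t - pf s) * a + (qf t - qf s) * b"
  proof (cases "pf s < pf t")
    case True
    then have "0 < (pf t - pf s) * a" using a by simp
    moreover have "0 \<le> (qf t - qf s) * b" using m b by simp
    ultimately show ?thesis by linarith
  next
    case False
    then have "qf s < qf t" using m sum assms by linarith
    then have "0 < (qf t - qf s) * b" using b by simp
    moreover have "0 \<le> (pf t - pf s) * a" using m a by simp
    ultimately show ?thesis by linarith
  qed
  then show ?thesis unfolding FF_lin a_def[symmetric] b_def[symmetric] by (simp add: algebra_simps)
qed

lemma sig_anti:
  assumes "1 < \<beta>" "0 \<le> s" "s < t"
  shows "sigma_hat t \<beta> < sigma_hat s \<beta>"
proof (rule ccontr)
  assume "\<not> ?thesis"
  then have le: "sigma_hat s \<beta> \<le> sigma_hat t \<beta>" by simp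
  have t0: "0 \<le> t" using assms by simp
  note S = sig_props[OF assms(1,2)] and T = sig_props[OF assms(1) t0]
  have "1 < FF \<beta> (pf t) (qf t) (sigma_hat s \<beta>)"
    using FF_t_strict[OF assms(1,2,3) S(1,2)] S(3) by simp
  also have "\<dots> \<le> FF \<beta> (pf t) (qf t) (sigma_hat t \<beta>)"
    using FF_strict[of \<beta> "pf t" "qf t" "sigma_hat s \<beta>" "sigma_hat t \<beta>"] le S T pq_pos[OF t0] assms(1)
    by (cases "sigma_hat s \<beta> = sigma_hat t \<beta>") auto
  finally show False using T(3) by simp
qed

lemma len_MM: "len t \<beta> = MM \<beta> (pf t) (qf t) (sigma_hat t \<beta>) - t - sqrt 2"
  unfolding len_def MM_def by (simp add: mult.commute)

lemma qf_cont: assumes "0 < t" shows "isCont qf t"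
  unfolding isCont_def LIM_eq
proof (intro allI impI)
  fix r :: real assume r: "0 < r"
  show "\<exists>s>0. \<forall>x. x \<noteq> t \<and> norm (x - t) < s \<longrightarrow> norm (qf x - qf t) < r"
  proof (intro exI[of _ "min r t"] conjI allI impI)
    fix x assume x: "x \<noteq> t \<and> norm (x - t) < min r t"
    then have "0 \<le> x" by auto
    then have "\<bar>qf x - qf t\<bar> \<le> \<bar>x - t\<bar>" using qf_lip[of t x] assms by simp
    then show "norm (qf x - qf t) < r" using x by simp
  qed (use r assms in auto)
qed

lemma pf_cont: assumes "0 < t" shows "isCont pf t"
  using qf_cont[OF assms] unfolding pf_def[abs_def] by (intro continuous_intros) auto

lemma FF_cont:
  assumes "1 < \<beta>" "0 < t" "0 < \<sigma>" "\<sigma> < 1"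
  shows "isCont (\<lambda>u. FF \<beta> (pf u) (qf u) \<sigma>) t"
proof -
  have "\<sigma>\<^sup>2 < 1" "\<sigma>\<^sup>2 < \<beta>\<^sup>2" using assms sq_lt1 sq_ltb by auto
  then show ?thesis unfolding FF_def
    using qf_cont[OF assms(2)] pf_cont[OF assms(2)]
    by (intro continuous_intros) auto
qed

lemma sig_cont:
  assumes "1 < \<beta>" "0 < t"
  shows "isCont (\<lambda>u. sigma_hat u \<beta>) t"
  unfolding isCont_def
proof (rule order_tendstoI)
  have t0: "0 \<le> t" using assms by simp
  note T = sig_props[OF assms(1) t0]
  have evpos: "eventually (\<lambda>u. 0 < u) (at t)"
    using order_tendstoD(1)[OF tendsto_ident_at assms(2)] .
  fix a assume a: "a < sigma_hat t \<beta>"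
  define s1 where "s1 = max a (sigma_hat t \<beta> / 2)"
  have s1: "0 < s1" "s1 < sigma_hat t \<beta>" "a \<le> s1" "s1 < 1" unfolding s1_def using a T by auto
  have "FF \<beta> (pf t) (qf t) s1 < 1"
    using FF_strict[of \<beta> "pf t" "qf t" s1 "sigma_hat t \<beta>"] s1 T pq_pos[OF t0] assms(1) by auto
  then have ev: "eventually (\<lambda>u. FF \<beta> (pf u) (qf u) s1 < 1) (at t)"
    using order_tendstoD(2)[OF FF_cont[OF assms s1(1), unfolded isCont_def]] s1 T(2) by simp
  show "eventually (\<lambda>u. a < sigma_hat u \<beta>) (at t)"
    using ev evpos
  proof (eventually_elim)
    case (elim u)
    have u0: "0 \<le> u" using elim by simp
    note U = sig_props[OF assms(1) u0]
    have "s1 < sigma_hat u \<beta>"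
    proof (rule ccontr)
      assume "\<not> ?thesis"
      then have "FF \<beta> (pf u) (qf u) (sigma_hat u \<beta>) \<le> FF \<beta> (pf u) (qf u) s1"
        using FF_strict[of \<beta> "pf u" "qf u" "sigma_hat u \<beta>" s1] U s1 T pq_pos[OF u0] assms(1)
        by (cases "sigma_hat u \<beta> = s1") auto
      then show False using U elim by simp
    qed
    then show ?case using s1 by simp
  qed
next
  have t0: "0 \<le> t" using assms by simp
  note T = sig_props[OF assms(1) t0]
  have evpos: "eventually (\<lambda>u. 0 < u) (at t)"
    using order_tendstoD(1)[OF tendsto_ident_at assms(2)] .
  fix a assume a: "sigma_hat t \<beta> < a"
  define s1 where "s1 = min a ((1 + sigma_hat t \<beta>) / 2)"
  have s1: "sigma_hat t \<beta> < s1" "s1 < 1" "s1 \<le> a" "0 < s1" unfolding s1_def using a T by (auto simp: min_def)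
  have "1 < FF \<beta> (pf t) (qf t) s1"
    using FF_strict[of \<beta> "pf t" "qf t" "sigma_hat t \<beta>" s1] s1 T pq_pos[OF t0] assms(1) by auto
  then have ev: "eventually (\<lambda>u. 1 < FF \<beta> (pf u) (qf u) s1) (at t)"
    using order_tendstoD(1)[OF FF_cont[OF assms _ s1(2), unfolded isCont_def]] s1 T by simp
  show "eventually (\<lambda>u. sigma_hat u \<beta> < a) (at t)"
    using ev evpos
  proof (eventually_elim)
    case (elim u)
    have u0: "0 \<le> u" using elim by simp
    note U = sig_props[OF assms(1) u0]
    have "sigma_hat u \<beta> < s1"
    proof (rule ccontr)
      assume "\<not> ?thesis"
      then have "FF \<beta> (pf u) (qf u) s1 \<le> FF \<beta> (pf u) (qf u) (sigma_hat u \<beta>)"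
        using FF_strict[of \<beta> "pf u" "qf u" s1 "sigma_hat u \<beta>"] U s1 T pq_pos[OF u0] assms(1)
        by (cases "sigma_hat u \<beta> = s1") auto
      then show False using U elim by simp
    qed
    then show ?case using s1 by simp
  qed
qed



lemma deriv_gen:
  assumes b: "1 < \<beta>" and J: "open J" "J \<subseteq> {0<..}" "t \<in> J"
    and lin: "\<And>u. u \<in> J \<Longrightarrow> pf u = pf t + c1 * (u - t) \<and> qf u = qf t + c2 * (u - t)"
    and c: "0 \<le> c1" "0 \<le> c2"
  shows "((\<lambda>u. len u \<beta>) has_real_derivative
     (c1 * sqrt (1 - (sigma_hat t \<beta>)\<^sup>2) + c2 * sqrt (\<beta>\<^sup>2 - (sigma_hat t \<beta>)\<^sup>2) - 1)) (at t)"
proof -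
  define sh where "sh u = sigma_hat u \<beta>" for u
  define M where "M u = MM \<beta> (pf u) (qf u) (sh u)" for u
  define g where "g u = c1 * sqrt (1 - (sh u)\<^sup>2) + c2 * sqrt (\<beta>\<^sup>2 - (sh u)\<^sup>2)" for u
  have Wlin: "WW \<beta> (pf u) (qf u) \<sigma> = WW \<beta> (pf t) (qf t) \<sigma>
      + (u - t) * (c1 * sqrt (1 - \<sigma>\<^sup>2) + c2 * sqrt (\<beta>\<^sup>2 - \<sigma>\<^sup>2))" if "u \<in> J" for u \<sigma>
  proof -
    have e: "pf u = pf t + c1 * (u - t)" "qf u = qf t + c2 * (u - t)" using lin[OF that] by auto
    show ?thesis unfolding WW_def e by (simp add: algebra_simps)
  qed
  have Mb: "M u \<ge> WW \<beta> (pf u) (qf u) \<sigma>" "M u = WW \<beta> (pf u) (qf u) (sh u)"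
    "0 < sh u" "sh u < 1"
    if "u \<in> J" "0 \<le> \<sigma>" "\<sigma> < 1" for u \<sigma>
  proof -
    have u0: "0 \<le> u" using that J by auto
    note U = sig_props[OF b u0]
    show "M u \<ge> WW \<beta> (pf u) (qf u) \<sigma>" "M u = WW \<beta> (pf u) (qf u) (sh u)"
      unfolding M_def sh_def
      using W_le[OF b _ _ U(1,2,3) that(2,3)] W_le[OF b _ _ U(1,2,3) less_imp_le[OF U(1)] U(2)]
        pq_pos[OF u0] by auto
    show "0 < sh u" "sh u < 1" using U unfolding sh_def by auto
  qed
  have bnd: "(u - t) * g t \<le> M u - M t \<and> M u - M t \<le> (u - t) * g u" if u: "u \<in> J" for u
  proof -
    have st: "0 < sh t" "sh t < 1" using Mb[OF J(3), of 0] by auto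
    have su: "0 < sh u" "sh u < 1" using Mb[OF u, of 0] by auto
    have "M u \<ge> WW \<beta> (pf u) (qf u) (sh t)" using Mb(1)[OF u, of "sh t"] st by simp
    also have "WW \<beta> (pf u) (qf u) (sh t) = M t + (u - t) * g t"
      using Wlin[OF u, of "sh t"] Mb(2)[OF J(3), of 0] unfolding g_def by simp
    finally have 1: "(u - t) * g t \<le> M u - M t" by simp
    have "M t \<ge> WW \<beta> (pf t) (qf t) (sh u)" using Mb(1)[OF J(3), of "sh u"] su by simp
    also have "WW \<beta> (pf t) (qf t) (sh u) = M u - (u - t) * g u"
      using Wlin[OF u, of "sh u"] Mb(2)[OF u, of 0] unfolding g_def by simp
    finally have 2: "M u - M t \<le> (u - t) * g u" by simp
    show ?thesis using 1 2 by simp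
  qed
  have t0: "0 < t" using J by auto
  have gc: "isCont g t" unfolding g_def sh_def using sig_cont[OF b t0]
    by (intro continuous_intros) auto
  have gl: "(g \<longlongrightarrow> g t) (at t)" using gc unfolding isCont_def .
  have MD: "(M has_real_derivative g t) (at t)"
    unfolding has_field_derivative_iff
  proof (rule tendsto_sandwich[where f = "\<lambda>u. min (g t) (g u)" and h = "\<lambda>u. max (g t) (g u)"])
    have ev: "\<forall>\<^sub>F u in at t. min (g t) (g u) \<le> (M u - M t) / (u - t) \<and> (M u - M t) / (u - t) \<le> max (g t) (g u)"
      using eventually_at_in_open[OF J(1,3)]
    proof eventually_elim
      case (elim u)
      then have u: "u \<in> J" "u \<noteq> t" by auto
      note B = bnd[OF u(1)]
      show ?case
      proof (cases "u < t")
        case True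
        then have n: "u - t < 0" by simp
        have "g u \<le> g t" using B n mult_le_cancel_left_neg[OF n, of "g t" "g u"] by linarith
        then have mm: "min (g t) (g u) = g u" "max (g t) (g u) = g t" by auto
        show ?thesis unfolding mm using B n
          by (simp add: neg_le_divide_eq neg_divide_le_eq mult.commute)
      next
        case False
        then have n: "0 < u - t" using u by simp
        have "g t \<le> g u" using B n mult_le_cancel_left_pos[OF n, of "g t" "g u"] by linarith
        then have mm: "min (g t) (g u) = g t" "max (g t) (g u) = g u" by auto
        show ?thesis unfolding mm using B n
          by (simp add: pos_le_divide_eq pos_divide_le_eq mult.commute)
      qed
    qed
    show "\<forall>\<^sub>F u in at t. min (g t) (g u) \<le> (M u - M t) / (u - t)"
      using ev by (rule eventually_mono) simp
    show "\<forall>\<^sub>F u in at t. (M u - M t) / (u - t) \<le> max (g t) (g u)"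
      using ev by (rule eventually_mono) simp
    show "((\<lambda>u. min (g t) (g u)) \<longlongrightarrow> g t) (at t)"
      using tendsto_min[OF tendsto_const[of "g t"] gl] by simp
    show "((\<lambda>u. max (g t) (g u)) \<longlongrightarrow> g t) (at t)"
      using tendsto_max[OF tendsto_const[of "g t"] gl] by simp
  qed
  have eq: "(\<lambda>u. len u \<beta>) = (\<lambda>u. M u - u - sqrt 2)"
    unfolding M_def sh_def by (simp add: len_MM)
  show ?thesis unfolding eq
    using DERIV_diff[OF DERIV_diff[OF MD DERIV_ident] DERIV_const[of "sqrt 2"]]
    unfolding g_def sh_def by simp
qed

lemma deriv_D:
  assumes "1 < \<beta>" "t \<in> {real (2*k) <..< real (2*k+1)}"
  shows "((\<lambda>u. len u \<beta>) has_real_derivative (sqrt (\<beta>\<^sup>2 - (sigma_hat t \<beta>)\<^sup>2) - 1)) (at t)"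
proof -
  have "t > 0" using assms by (auto intro: le_less_trans)
  have J: "{real (2*k) <..< real (2*k+1)} \<subseteq> {0<..}" by auto
  show ?thesis
    using deriv_gen[OF assms(1) open_greaterThanLessThan J assms(2), of 0 1] D_pq[OF assms(2)] D_pq
    by simp
qed

lemma deriv_L:
  assumes "1 < \<beta>" "t \<in> {real (2*k+1) <..< real (2*k+2)}"
  shows "((\<lambda>u. len u \<beta>) has_real_derivative (sqrt (1 - (sigma_hat t \<beta>)\<^sup>2) - 1)) (at t)"
proof -
  have J: "{real (2*k+1) <..< real (2*k+2)} \<subseteq> {0<..}" by auto
  show ?thesis
    using deriv_gen[OF assms(1) open_greaterThanLessThan J assms(2), of 1 0] L_pq[OF assms(2)] L_pq
    by simp
qed



lemma conv_gen:
  fixes f f' :: "real \<Rightarrow> real"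
  assumes der: "\<And>x. x \<in> {a<..<b} \<Longrightarrow> (f has_real_derivative f' x) (at x)"
    and inc: "\<And>x y. x \<in> {a<..<b} \<Longrightarrow> y \<in> {a<..<b} \<Longrightarrow> x < y \<Longrightarrow> f' x < f' y"
  shows "strict_convex_on {a<..<b} f"
proof -
  have main: "f (u * x + (1 - u) * y) < u * f x + (1 - u) * f y"
    if xy: "x \<in> {a<..<b}" "y \<in> {a<..<b}" "x < y" and u: "0 < u" "u < 1" for x y u
  proof -
    define z where "z = u * x + (1 - u) * y"
    have zx: "z - x = (1 - u) * (y - x)" unfolding z_def by (simp add: algebra_simps)
    have yz: "y - z = u * (y - x)" unfolding z_def by (simp add: algebra_simps)
    have p1: "0 < (1 - u) * (y - x)" using u xy by simp
    have p2: "0 < u * (y - x)" using u xy by simp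
    have xz: "x < z" using zx p1 by linarith
    have zy: "z < y" using yz p2 by linarith
    obtain \<xi>1 where \<xi>1: "x < \<xi>1" "\<xi>1 < z" "f z - f x = (z - x) * f' \<xi>1"
    proof -
      have "\<And>w. x \<le> w \<Longrightarrow> w \<le> z \<Longrightarrow> (f has_real_derivative f' w) (at w)"
        using xy zy by (intro der) auto
      then show ?thesis using MVT2[OF xz, of f f'] that by blast
    qed
    obtain \<xi>2 where \<xi>2: "z < \<xi>2" "\<xi>2 < y" "f y - f z = (y - z) * f' \<xi>2"
    proof -
      have "\<And>w. z \<le> w \<Longrightarrow> w \<le> y \<Longrightarrow> (f has_real_derivative f' w) (at w)"
        using xy xz by (intro der) auto
      then show ?thesis using MVT2[OF zy, of f f'] that by blast
    qed
    have d: "f' \<xi>1 < f' \<xi>2" using inc[of \<xi>1 \<xi>2] \<xi>1 \<xi>2 xy by auto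
    have fx: "f x = f z - (z - x) * f' \<xi>1" using \<xi>1 by simp
    have fy: "f y = f z + (y - z) * f' \<xi>2" using \<xi>2 by simp
    have "u * f x + (1 - u) * f y - f z = u * (1 - u) * (y - x) * (f' \<xi>2 - f' \<xi>1)"
      unfolding fx fy zx yz by (simp add: algebra_simps)
    moreover have "0 < u * (1 - u) * (y - x) * (f' \<xi>2 - f' \<xi>1)" using u xy d by simp
    ultimately show ?thesis unfolding z_def by simp
  qed
  show ?thesis unfolding strict_convex_on_def
  proof (intro ballI allI impI)
    fix x y and u :: real assume x: "x \<in> {a<..<b}" and y: "y \<in> {a<..<b}" and h: "x \<noteq> y \<and> 0 < u \<and> u < 1"
    show "f (u * x + (1 - u) * y) < u * f x + (1 - u) * f y"
    proof (cases "x < y")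
      case True then show ?thesis using main[OF x y True] h by simp
    next
      case False
      then have "y < x" using h by simp
      from main[OF y x this, of "1 - u"] h show ?thesis by (simp add: algebra_simps)
    qed
  qed
qed

lemma cont_from_der:
  assumes "\<And>x. x \<in> {a<..<b} \<Longrightarrow> (f has_real_derivative f' x) (at x)" "a < c" "d < b"
  shows "continuous_on {c..d} f"
proof (intro continuous_at_imp_continuous_on ballI)
  fix x assume "x \<in> {c..d}"
  then have "x \<in> {a<..<b}" using assms by auto
  then show "isCont f x" using DERIV_isCont[OF assms(1)] by blast
qed

lemma sq_anti:
  assumes "1 < \<beta>" "0 \<le> s" "s < t"
  shows "(sigma_hat t \<beta>)\<^sup>2 < (sigma_hat s \<beta>)\<^sup>2"
  using sig_anti[OF assms] sig_props(1)[OF assms(1), of t] assms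
  by (simp add: power_strict_mono)

lemma sh_half:
  assumes "1 < \<beta>" "0 < t"
  shows "(sigma_hat t \<beta>)\<^sup>2 < 1/2"
proof -
  have t0: "0 \<le> t" using assms by simp
  note T = sig_props[OF assms(1) t0]
  define s where "s = sigma_hat t \<beta>"
  have s: "0 < s" "s < 1" using T s_def by auto
  have s1: "s\<^sup>2 < 1" using s sq_lt1 by simp
  have "FF \<beta> (pf 0) (qf 0) s < 1" using FF_t_strict[OF assms(1) order_refl assms(2) s] T s_def by simp
  then have "s / sqrt (1 - s\<^sup>2) < 1" by (simp add: FF_def pf0 qf0)
  then have "s < sqrt (1 - s\<^sup>2)" using s1 by (simp add: divide_less_eq)
  then have "s\<^sup>2 < (sqrt (1 - s\<^sup>2))\<^sup>2" using s by (simp add: power_strict_mono)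
  then have "s\<^sup>2 < 1 - s\<^sup>2" using s1 by simp
  then show ?thesis unfolding s_def by simp
qed

lemma qf_contOn: "continuous_on {0..} qf"
  unfolding continuous_on_iff
proof (intro ballI allI impI)
  fix x e assume x: "x \<in> {0::real..}" and e: "0 < (e::real)"
  show "\<exists>d>0. \<forall>x'\<in>{0..}. dist x' x < d \<longrightarrow> dist (qf x') (qf x) < e"
  proof (intro exI[of _ e] conjI ballI impI)
    fix x' assume "x' \<in> {0::real..}" "dist x' x < e"
    then show "dist (qf x') (qf x) < e" using qf_lip[of x x'] x by (simp add: dist_real_def)
  qed (use e in simp)
qed

lemma pf_contOn: "continuous_on {0..} pf"
  unfolding pf_def[abs_def] using qf_contOn by (intro continuous_intros)



lemma sq_gt: assumes "0 < t" "1 < \<beta>" shows "0 < sigma_hat t \<beta>" "sigma_hat t \<beta> < 1"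
  using sig_props[OF assms(2)] assms(1) by auto

lemma antiL:
  assumes b: "1 < \<beta>"
  shows "strict_antimono_on {real (2*k+1) <..< real (2*k+2)} (\<lambda>s. len s \<beta>)"
proof (rule monotone_onI)
  fix x y assume x: "x \<in> {real (2*k+1) <..< real (2*k+2)}" and y: "y \<in> {real (2*k+1) <..< real (2*k+2)}" and xy: "x < y"
  have der: "\<And>z. z \<in> {real (2*k+1) <..< real (2*k+2)} \<Longrightarrow>
     ((\<lambda>s. len s \<beta>) has_real_derivative (sqrt (1 - (sigma_hat z \<beta>)\<^sup>2) - 1)) (at z)"
    using deriv_L[OF b] by blast
  have "len y \<beta> < len x \<beta>"
  proof (rule DERIV_neg_imp_decreasing_open[OF xy])
    fix z assume z: "x < z" "z < y"
    then have zI: "z \<in> {real (2*k+1) <..< real (2*k+2)}" using x y by auto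
    then have "0 < z" by (auto intro: le_less_trans)
    then have "0 < sigma_hat z \<beta>" using sq_gt b by blast
    then have "sqrt (1 - (sigma_hat z \<beta>)\<^sup>2) - 1 < 0" by simp
    then show "\<exists>d. ((\<lambda>s. len s \<beta>) has_real_derivative d) (at z) \<and> d < 0" using der[OF zI] by blast
  next
    show "continuous_on {x..y} (\<lambda>s. len s \<beta>)"
      by (rule cont_from_der[OF der]) (use x y in auto)
  qed
  then show "len y \<beta> < len x \<beta>" .
qed

lemma monoD:
  assumes b: "1 < \<beta>" and bb: "sqrt (3/2) \<le> \<beta>"
  shows "strict_mono_on {real (2*k) <..< real (2*k+1)} (\<lambda>s. len s \<beta>)"
proof (rule monotone_onI)
  have b32: "3/2 \<le> \<beta>\<^sup>2" using power_mono[OF bb, of 2] by simp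
  fix x y assume x: "x \<in> {real (2*k) <..< real (2*k+1)}" and y: "y \<in> {real (2*k) <..< real (2*k+1)}" and xy: "x < y"
  have der: "\<And>z. z \<in> {real (2*k) <..< real (2*k+1)} \<Longrightarrow>
     ((\<lambda>s. len s \<beta>) has_real_derivative (sqrt (\<beta>\<^sup>2 - (sigma_hat z \<beta>)\<^sup>2) - 1)) (at z)"
    using deriv_D[OF b] by blast
  have "len x \<beta> < len y \<beta>"
  proof (rule DERIV_pos_imp_increasing_open[OF xy])
    fix z assume z: "x < z" "z < y"
    then have zI: "z \<in> {real (2*k) <..< real (2*k+1)}" using x y by auto
    then have "0 < z" by (auto intro: le_less_trans)
    then have "(sigma_hat z \<beta>)\<^sup>2 < 1/2" using sh_half b by blast
    then have "1 < \<beta>\<^sup>2 - (sigma_hat z \<beta>)\<^sup>2" using b32 by simp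
    then have "0 < sqrt (\<beta>\<^sup>2 - (sigma_hat z \<beta>)\<^sup>2) - 1" by simp
    then show "\<exists>d. ((\<lambda>s. len s \<beta>) has_real_derivative d) (at z) \<and> d > 0" using der[OF zI] by blast
  next
    show "continuous_on {x..y} (\<lambda>s. len s \<beta>)"
      by (rule cont_from_der[OF der]) (use x y in auto)
  qed
  then show "len x \<beta> < len y \<beta>" .
qed

lemma convD:
  assumes b: "1 < \<beta>"
  shows "strict_convex_on {real (2*k) <..< real (2*k+1)} (\<lambda>s. len s \<beta>)"
proof (rule conv_gen)
  show "((\<lambda>s. len s \<beta>) has_real_derivative (sqrt (\<beta>\<^sup>2 - (sigma_hat x \<beta>)\<^sup>2) - 1)) (at x)"
    if "x \<in> {real (2*k) <..< real (2*k+1)}" for x using deriv_D[OF b that] .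
  fix x y assume x: "x \<in> {real (2*k) <..< real (2*k+1)}" and "y \<in> {real (2*k) <..< real (2*k+1)}" and xy: "x < y"
  have "0 \<le> x" using x by auto
  then have "(sigma_hat y \<beta>)\<^sup>2 < (sigma_hat x \<beta>)\<^sup>2" using sq_anti[OF b _ xy] by simp
  then show "sqrt (\<beta>\<^sup>2 - (sigma_hat x \<beta>)\<^sup>2) - 1 < sqrt (\<beta>\<^sup>2 - (sigma_hat y \<beta>)\<^sup>2) - 1" by simp
qed

lemma convL:
  assumes b: "1 < \<beta>"
  shows "strict_convex_on {real (2*k+1) <..< real (2*k+2)} (\<lambda>s. len s \<beta>)"
proof (rule conv_gen)
  show "((\<lambda>s. len s \<beta>) has_real_derivative (sqrt (1 - (sigma_hat x \<beta>)\<^sup>2) - 1)) (at x)"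
    if "x \<in> {real (2*k+1) <..< real (2*k+2)}" for x using deriv_L[OF b that] .
  fix x y assume x: "x \<in> {real (2*k+1) <..< real (2*k+2)}" and "y \<in> {real (2*k+1) <..< real (2*k+2)}" and xy: "x < y"
  have "0 \<le> x" using x by auto
  then have "(sigma_hat y \<beta>)\<^sup>2 < (sigma_hat x \<beta>)\<^sup>2" using sq_anti[OF b _ xy] by simp
  then show "sqrt (1 - (sigma_hat x \<beta>)\<^sup>2) - 1 < sqrt (1 - (sigma_hat y \<beta>)\<^sup>2) - 1" by simp
qed

lemma t0_exists:
  assumes b: "1 < \<beta>" and bs: "\<beta> < sqrt (3/2)"
  shows "\<exists>t0. t0 > 0 \<and> sigma_hat t0 \<beta> = sqrt (\<beta>\<^sup>2 - 1)"
proof -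
  have b2: "\<beta>\<^sup>2 < 3/2" using power_strict_mono[OF bs, of 2] b by simp
  have "1 * 1 < \<beta> * \<beta>" using b by (intro mult_strict_mono) auto
  then have b1: "1 < \<beta>\<^sup>2" by (simp add: power2_eq_square)
  define s where "s = sqrt (\<beta>\<^sup>2 - 1)"
  have s2: "s\<^sup>2 = \<beta>\<^sup>2 - 1" unfolding s_def using b1 by simp
  have s0: "0 < s" unfolding s_def using b1 by simp
  have sh: "s\<^sup>2 < 1/2" using s2 b2 by simp
  have "s\<^sup>2 < 1" using sh by simp
  then have s1: "s < 1" using s0 by (simp add: abs_square_less_1)
  define A where "A = s / sqrt (1 - s\<^sup>2)"
  have Bs: "s / sqrt (\<beta>\<^sup>2 - s\<^sup>2) = s" using s2 by simp
  have A0: "0 < A" unfolding A_def using s0 sh by simp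
  have hlin: "FF \<beta> (pf t) (qf t) s = pf t * A + qf t * s" for t
    unfolding FF_lin A_def Bs ..
  have "s\<^sup>2 < 1 - s\<^sup>2" using sh by simp
  then have "s < sqrt (1 - s\<^sup>2)" by (rule real_less_rsqrt)
  then have A1: "A < 1" unfolding A_def using sh by simp
  define m where "m = min A s"
  have m0: "0 < m" unfolding m_def using A0 s0 by simp
  define T where "T = 1 / m"
  have T0: "0 \<le> T" unfolding T_def using m0 by simp
  have "1 \<le> FF \<beta> (pf T) (qf T) s"
  proof -
    have "pf T * A + qf T * s \<ge> pf T * m + qf T * m"
      using pq_pos[OF T0] unfolding m_def by (intro add_mono mult_left_mono) auto
    also have "pf T * m + qf T * m = (T + 1) * m" unfolding pf_def by (simp add: algebra_simps)
    also have "\<dots> \<ge> 1" unfolding T_def using m0 by (simp add: algebra_simps)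
    finally show ?thesis unfolding hlin by simp
  qed
  moreover have "FF \<beta> (pf 0) (qf 0) s \<le> 1" using hlin[of 0] A1 by (simp add: pf0 qf0)
  moreover have "continuous_on {0..T} (\<lambda>t. FF \<beta> (pf t) (qf t) s)"
    unfolding hlin
    using continuous_on_subset[OF pf_contOn, of "{0..T}"] continuous_on_subset[OF qf_contOn, of "{0..T}"]
    by (intro continuous_intros) auto
  ultimately obtain t0 where t0: "0 \<le> t0" "t0 \<le> T" "FF \<beta> (pf t0) (qf t0) s = 1"
    using IVT'[of "\<lambda>t. FF \<beta> (pf t) (qf t) s" 0 1 T] T0 by auto
  have "t0 \<noteq> 0" using t0 A1 hlin[of 0] by (auto simp: pf0 qf0)
  then have "0 < t0" using t0 by simp
  moreover have "sigma_hat t0 \<beta> = s" using sig_eq[OF b t0(1) s0 s1 t0(3)] .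
  ultimately show ?thesis unfolding s_def by blast
qed



theorem lemma3p4:
  fixes \<beta> :: real
  assumes "\<beta> > 1"
  shows
   "(\<forall>t\<in>I_L. ((\<lambda>s. len s \<beta>) has_real_derivative
        (sqrt (1 - (sigma_hat t \<beta>)\<^sup>2) - 1)) (at t))
  \<and> (\<forall>t\<in>I_D. ((\<lambda>s. len s \<beta>) has_real_derivative
        (sqrt (\<beta>\<^sup>2 - (sigma_hat t \<beta>)\<^sup>2) - 1)) (at t))
  \<and> (\<forall>k::nat. strict_convex_on {real (2*k+1) <..< real (2*k+2)} (\<lambda>s. len s \<beta>)
             \<and> strict_convex_on {real (2*k) <..< real (2*k+1)} (\<lambda>s. len s \<beta>))
  \<and> (\<forall>k::nat. strict_antimono_on {real (2*k+1) <..< real (2*k+2)} (\<lambda>s. len s \<beta>))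
  \<and> (\<beta> \<ge> sqrt (3/2) \<longrightarrow>
       (\<forall>k::nat. strict_mono_on {real (2*k) <..< real (2*k+1)} (\<lambda>s. len s \<beta>)))
  \<and> (\<beta> < sqrt (3/2) \<longrightarrow>
       (\<exists>!t0. t0 > 0 \<and> sigma_hat t0 \<beta> = sqrt (\<beta>\<^sup>2 - 1))
     \<and> (\<forall>t0. t0 > 0 \<and> sigma_hat t0 \<beta> = sqrt (\<beta>\<^sup>2 - 1) \<longrightarrow>
           (\<forall>t\<in>I_D. 0 \<le> t \<and> t < t0 \<longrightarrow> deriv (\<lambda>s. len s \<beta>) t < 0)
         \<and> (\<forall>t\<in>I_D. t > t0 \<longrightarrow> deriv (\<lambda>s. len s \<beta>) t > 0)))"
proof -
  have b: "1 < \<beta>" using assms .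
  have P1: "\<forall>t\<in>I_L. ((\<lambda>s. len s \<beta>) has_real_derivative
        (sqrt (1 - (sigma_hat t \<beta>)\<^sup>2) - 1)) (at t)"
    unfolding I_L_def using deriv_L[OF b] by blast
  have P2: "\<forall>t\<in>I_D. ((\<lambda>s. len s \<beta>) has_real_derivative
        (sqrt (\<beta>\<^sup>2 - (sigma_hat t \<beta>)\<^sup>2) - 1)) (at t)"
    unfolding I_D_def using deriv_D[OF b] by blast
  have P3: "\<forall>k::nat. strict_convex_on {real (2*k+1) <..< real (2*k+2)} (\<lambda>s. len s \<beta>)
             \<and> strict_convex_on {real (2*k) <..< real (2*k+1)} (\<lambda>s. len s \<beta>)"
    using convL[OF b] convD[OF b] by blast
  have P4: "\<forall>k::nat. strict_antimono_on {real (2*k+1) <..< real (2*k+2)} (\<lambda>s. len s \<beta>)"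
    using antiL[OF b] by blast
  have P5: "\<beta> \<ge> sqrt (3/2) \<longrightarrow>
       (\<forall>k::nat. strict_mono_on {real (2*k) <..< real (2*k+1)} (\<lambda>s. len s \<beta>))"
    using monoD[OF b] by blast
  have "1 * 1 < \<beta> * \<beta>" using b by (intro mult_strict_mono) auto
  then have b1: "1 < \<beta>\<^sup>2" by (simp add: power2_eq_square)
  have sq: "(sqrt (\<beta>\<^sup>2 - 1))\<^sup>2 = \<beta>\<^sup>2 - 1" using b1 by simp
  have P6: "\<beta> < sqrt (3/2) \<longrightarrow>
       (\<exists>!t0. t0 > 0 \<and> sigma_hat t0 \<beta> = sqrt (\<beta>\<^sup>2 - 1))
     \<and> (\<forall>t0. t0 > 0 \<and> sigma_hat t0 \<beta> = sqrt (\<beta>\<^sup>2 - 1) \<longrightarrow>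
           (\<forall>t\<in>I_D. 0 \<le> t \<and> t < t0 \<longrightarrow> deriv (\<lambda>s. len s \<beta>) t < 0)
         \<and> (\<forall>t\<in>I_D. t > t0 \<longrightarrow> deriv (\<lambda>s. len s \<beta>) t > 0))"
  proof
    assume bs: "\<beta> < sqrt (3/2)"
    have uniq: "t0 = t1" if "t0 > 0" "t1 > 0" "sigma_hat t0 \<beta> = sigma_hat t1 \<beta>" for t0 t1
    proof (cases t0 t1 rule: linorder_cases)
      case less then show ?thesis using sig_anti[OF b _ less] that by simp
    next
      case greater then show ?thesis using sig_anti[OF b _ greater] that by simp
    qed
    have E: "\<exists>!t0. t0 > 0 \<and> sigma_hat t0 \<beta> = sqrt (\<beta>\<^sup>2 - 1)"
      using t0_exists[OF b bs] uniq by metis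
    have S: "(\<forall>t\<in>I_D. 0 \<le> t \<and> t < t0 \<longrightarrow> deriv (\<lambda>s. len s \<beta>) t < 0)
         \<and> (\<forall>t\<in>I_D. t > t0 \<longrightarrow> deriv (\<lambda>s. len s \<beta>) t > 0)"
      if t0: "t0 > 0" "sigma_hat t0 \<beta> = sqrt (\<beta>\<^sup>2 - 1)" for t0
    proof (intro conjI ballI impI)
      fix t assume tD: "t \<in> I_D" and tt: "0 \<le> t \<and> t < t0"
      have d: "deriv (\<lambda>s. len s \<beta>) t = sqrt (\<beta>\<^sup>2 - (sigma_hat t \<beta>)\<^sup>2) - 1"
        using P2 tD by (intro DERIV_imp_deriv) blast
      have "(sigma_hat t0 \<beta>)\<^sup>2 < (sigma_hat t \<beta>)\<^sup>2" using sq_anti[OF b] tt by blast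
      then have "\<beta>\<^sup>2 - (sigma_hat t \<beta>)\<^sup>2 < 1" using t0 sq by simp
      then show "deriv (\<lambda>s. len s \<beta>) t < 0" unfolding d
        using real_sqrt_lt_1_iff by simp
    next
      fix t assume tD: "t \<in> I_D" and tt: "t > t0"
      have d: "deriv (\<lambda>s. len s \<beta>) t = sqrt (\<beta>\<^sup>2 - (sigma_hat t \<beta>)\<^sup>2) - 1"
        using P2 tD by (intro DERIV_imp_deriv) blast
      have "(sigma_hat t \<beta>)\<^sup>2 < (sigma_hat t0 \<beta>)\<^sup>2" using sq_anti[OF b _ tt] t0 by simp
      then have "1 < \<beta>\<^sup>2 - (sigma_hat t \<beta>)\<^sup>2" using t0 sq by simp
      then show "deriv (\<lambda>s. len s \<beta>) t > 0" unfolding d by simp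
    qed
    show "(\<exists>!t0. t0 > 0 \<and> sigma_hat t0 \<beta> = sqrt (\<beta>\<^sup>2 - 1))
     \<and> (\<forall>t0. t0 > 0 \<and> sigma_hat t0 \<beta> = sqrt (\<beta>\<^sup>2 - 1) \<longrightarrow>
           (\<forall>t\<in>I_D. 0 \<le> t \<and> t < t0 \<longrightarrow> deriv (\<lambda>s. len s \<beta>) t < 0)
         \<and> (\<forall>t\<in>I_D. t > t0 \<longrightarrow> deriv (\<lambda>s. len s \<beta>) t > 0))"
      using E S by blast
  qed
  show ?thesis using P1 P2 P3 P4 P5 P6 by blast
qed

end
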